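(* Fix $1\le p<2$. There is a constant $U_p>0$ depending only on $p$ such that for every integer $n\ge3$, if $X_1,\dots,X_n$ are independent random variables with distribution $\mathcal{D}_p$, then $$\Pr\Big[\sum_{i=1}^n|X_i|^p\le U_p\,n\log n\Big]\ge1-\frac{\log\log n}{\log n}.$$
   Context: $\log$ denotes the natural logarithm. $\mathcal{D}_p$ denotes the standard symmetric $p$-stable distribution: if $Y_1,\dots,Y_m$ are i.i.d. $\sim\mathcal{D}_p$ and $a\in\mathbb{R}^m$, then $\sum_ia_iY_i$ has the same distribution as $(\sum_i|a_i|^p)^{1/p}Y$ with $Y\sim\mathcal{D}_p$; $\mathcal{D}_1$ is the standard Cauchy distribution. *)

theory Defs
  imports "HOL-Probability.Probability"
begin

text \<open>For p = 1 this is the standard Cauchy distribution.\<close>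
definition std_sym_stable :: "real \<Rightarrow> real measure \<Rightarrow> bool" where
  "std_sym_stable p D \<longleftrightarrow>
     prob_space D \<and> sets D = sets borel \<and>
     (\<forall>t. char D t = complex_of_real (exp (- (\<bar>t\<bar> powr p))))"

end

theory Submission
  imports Defs
begin


lemma main_bound:
  assumes "real_distribution M" "u > 0"
  shows "Re (CLBINT t:{-u..u}. 1 - char M t) \<ge> u * measure M {x. abs x \<ge> 2 / u}"
proof -
  interpret Mn: real_distribution M by fact
  have u: "u > 0" by fact
  have *: "\<And>u x. u > 0 \<Longrightarrow> x \<noteq> 0 \<Longrightarrow> (CLBINT t:{-u..u}. 1 - iexp (t * x)) =
      2 * (u  - sin (u * x) / x)"
  proof -
    fix u :: real and x :: real
    assume "u > 0" and "x \<noteq> 0"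
    hence "(CLBINT t:{-u..u}. 1 - iexp (t * x)) = (CLBINT t=-u..u. 1 - iexp (t * x))"
      by (subst interval_integral_Icc, auto)
    also have "\<dots> = (CLBINT t=-u..ereal 0. 1 - iexp (t * x)) + (CLBINT t= ereal 0..u. 1 - iexp (t * x))"
      using \<open>u > 0\<close>
      by (subst interval_integral_sum; force simp add: interval_integrable_isCont)
    also have "\<dots> = (CLBINT t=ereal 0..u. 1 - iexp (t * -x)) + (CLBINT t=ereal 0..u. 1 - iexp (t * x))"
      by (subst interval_integral_reflect, auto)
    also have "... = CLBINT xa=ereal 0..ereal u. 1 - iexp (xa * - x) + (1 - iexp (xa * x))"
      by (subst interval_lebesgue_integral_add (2) [symmetric]) (auto simp: interval_integrable_isCont)
    also have "\<dots> = (LBINT t=ereal 0..u. 2 - 2 * cos (t * x))"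
      unfolding exp_Euler cos_of_real by (simp flip: interval_lebesgue_integral_of_real)
    also have "\<dots> = 2 * u - 2 * sin (u * x) / x"
      by (subst interval_lebesgue_integral_diff)
         (auto intro!: interval_integrable_isCont
               simp: interval_lebesgue_integral_of_real integral_cos [OF \<open>x \<noteq> 0\<close>] mult.commute[of _ x])
    finally show "(CLBINT t:{-u..u}. 1 - iexp (t * x)) = 2 * (u  - sin (u * x) / x)"
      by (simp add: field_simps)
  qed
    interpret P: pair_sigma_finite "M" lborel ..
    have Mn1 [simp]: "measure (M) UNIV = 1" by (metis Mn.prob_space Mn.space_eq_univ)
    have Mn2 [simp]: "\<And>x. complex_integrable (M) (\<lambda>t. exp (\<i> * complex_of_real (x * t)))"
      by (rule Mn.integrable_const_bound [where B = 1], auto)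
    have Mn3: "set_integrable (M \<Otimes>\<^sub>M lborel) (UNIV \<times> {- u..u}) (\<lambda>a. 1 - exp (\<i> * complex_of_real (snd a * fst a)))"
      using \<open>0 < u\<close>
      unfolding set_integrable_def
      by (intro integrableI_bounded_set_indicator [where B="2"])
         (auto simp: lborel.emeasure_pair_measure_Times ennreal_mult_less_top not_less top_unique
               split: split_indicator
               intro!: order_trans [OF norm_triangle_ineq4])
    have "(CLBINT t:{-u..u}. 1 - char (M) t) =
        (CLBINT t:{-u..u}. (CLINT x | M. 1 - iexp (t * x)))"
      unfolding char_def by (rule set_lebesgue_integral_cong, auto simp del: of_real_mult)
    also have "\<dots> = (CLBINT t. (CLINT x | M. indicator {-u..u} t *\<^sub>R (1 - iexp (t * x))))"
      unfolding set_lebesgue_integral_def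
      by (rule Bochner_Integration.integral_cong) (auto split: split_indicator)
    also have "\<dots> = (CLINT x | M. (CLBINT t:{-u..u}. 1 - iexp (t * x)))"
      using Mn3 by (subst P.Fubini_integral) (auto simp: indicator_times split_beta' set_integrable_def set_lebesgue_integral_def)
    also have "\<dots> = (CLINT x | M. (if x = 0 then 0 else 2 * (u  - sin (u * x) / x)))"
      using \<open>u > 0\<close> by (intro Bochner_Integration.integral_cong, auto simp add: * simp del: of_real_mult)
    also have "\<dots> = (LINT x | M. (if x = 0 then 0 else 2 * (u  - sin (u * x) / x)))"
      by (rule integral_complex_of_real)
    finally have "Re (CLBINT t:{-u..u}. 1 - char (M) t) =
       (LINT x | M. (if x = 0 then 0 else 2 * (u  - sin (u * x) / x)))" by simp
    also have "\<dots> \<ge> (LINT x : {x. abs x \<ge> 2 / u} | M. u)"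
    proof -
      have "complex_integrable (M) (\<lambda>x. CLBINT t:{-u..u}. 1 - iexp (snd (x, t) * fst (x, t)))"
        using Mn3 unfolding set_integrable_def set_lebesgue_integral_def
        by (intro P.integrable_fst) (simp add: indicator_times split_beta')
      hence "complex_integrable (M) (\<lambda>x. if x = 0 then 0 else 2 * (u  - sin (u * x) / x))"
        using \<open>u > 0\<close>
        unfolding set_integrable_def
        by (subst Bochner_Integration.integrable_cong) (auto simp add: * simp del: of_real_mult)
      hence **: "integrable (M) (\<lambda>x. if x = 0 then 0 else 2 * (u  - sin (u * x) / x))"
        unfolding complex_of_real_integrable_eq .
      have "2 * sin x \<le> x" if "2 \<le> x" for x :: real
        by (rule order_trans[OF _ \<open>2 \<le> x\<close>]) auto
      moreover have "x \<le> 2 * sin x" if "x \<le> - 2" for x :: real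
        by (rule order_trans[OF \<open>x \<le> - 2\<close>]) auto
      moreover have "x < 0 \<Longrightarrow> x \<le> sin x" for x :: real
        using sin_x_le_x[of "-x"] by simp
      ultimately show ?thesis
        using \<open>u > 0\<close> unfolding set_lebesgue_integral_def
        by (intro integral_mono [OF _ **])
           (auto simp: divide_simps sin_x_le_x mult.commute[of u] mult_neg_pos top_unique less_top[symmetric]
                 split: split_indicator)
    qed
    also (xtrans) have "(LINT x : {x. abs x \<ge> 2 / u} | M. u) = u * measure (M) {x. abs x \<ge> 2 / u}"
      unfolding set_lebesgue_integral_def
      by (simp add: Mn.emeasure_eq_measure)
    finally show "Re (CLBINT t:{-u..u}. 1 - char (M) t) \<ge> u * measure (M) {x. abs x \<ge> 2 / u}" .
qed



lemma stable_int_bound: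
  assumes "std_sym_stable p D" "0 < p" "u > 0"
  shows "Re (CLBINT t:{-u..u}. 1 - char D t) \<le> 2 * u * u powr p"
proof -
  have "(CLBINT t:{-u..u}. 1 - char D t) = (CLBINT t:{-u..u}. complex_of_real (1 - exp (- (\<bar>t\<bar> powr p))))"
    using assms(1) unfolding std_sym_stable_def by simp
  also have "\<dots> = complex_of_real (LBINT t:{-u..u}. 1 - exp (- (\<bar>t\<bar> powr p)))"
    by (rule set_integral_complex_of_real)
  finally have eq: "Re (CLBINT t:{-u..u}. 1 - char D t) = (LBINT t:{-u..u}. 1 - exp (- (\<bar>t\<bar> powr p)))"
    by simp
  have cont: "continuous_on {-u..u} (\<lambda>t. 1 - exp (- (\<bar>t\<bar> powr p)))"
    using assms(2) by (intro continuous_intros continuous_on_powr') auto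
  have "(LBINT t:{-u..u}. 1 - exp (- (\<bar>t\<bar> powr p))) \<le> (LBINT t:{-u..u}. u powr p)"
  proof (rule set_integral_mono)
    show "set_integrable lborel {- u..u} (\<lambda>t. 1 - exp (- (\<bar>t\<bar> powr p)))"
      by (rule borel_integrable_atLeastAtMost'[OF cont])
    show "set_integrable lborel {- u..u} (\<lambda>t. u powr p)"
      by (rule borel_integrable_atLeastAtMost') (intro continuous_intros)
    fix t assume t: "t \<in> {-u..u}"
    have "1 - exp (- (\<bar>t\<bar> powr p)) \<le> \<bar>t\<bar> powr p"
      using exp_ge_add_one_self[of "- (\<bar>t\<bar> powr p)"] by simp
    also have "\<dots> \<le> u powr p"
      using t assms by (intro powr_mono2) auto
    finally show "1 - exp (- (\<bar>t\<bar> powr p)) \<le> u powr p" .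
  qed
  also have "(LBINT t:{-u..u}. u powr p) = 2 * u * u powr p"
    using assms by (simp add: set_integral_const)
  finally show ?thesis using eq by simp
qed

lemma stable_tail:
  assumes "std_sym_stable p D" "0 < p" "p \<le> 2" "s > 0"
  shows "measure D {x. s \<le> \<bar>x\<bar>} \<le> 8 * s powr (-p)"
proof -
  have rd: "real_distribution D" using assms(1) unfolding std_sym_stable_def
    by (simp add: real_distribution_def real_distribution_axioms_def)
  define u where "u = 2 / s"
  have u: "u > 0" using assms by (simp add: u_def)
  have "u * measure D {x. abs x \<ge> 2 / u} \<le> 2 * u * u powr p"
    using main_bound[OF rd u] stable_int_bound[OF assms(1,2) u] by linarith
  hence "u * measure D {x. abs x \<ge> s} \<le> u * (2 * u powr p)"
    using u by (simp add: u_def)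
  hence "measure D {x. abs x \<ge> s} \<le> 2 * u powr p"
    using u by (simp only: mult_le_cancel_left_pos)
  also have "u powr p = 2 powr p * s powr (-p)"
    using assms by (simp add: u_def powr_divide powr_minus_divide)
  also have "2 * (2 powr p * s powr (-p)) \<le> 2 * (4 * s powr (-p))"
  proof -
    have "2 powr p \<le> 2 powr 2" using assms by (intro powr_mono) auto
    thus ?thesis by (intro mult_left_mono mult_right_mono) auto
  qed
  finally show ?thesis by (simp add: set_eq_iff)
qed



lemma dyadic_sum_full:
  fixes y :: real
  assumes "2^K \<le> y"
  shows "(\<Sum>k<K. (if 2^k \<le> y then (2::real)^k else 0)) = 2^K - 1"
    and "(\<Sum>k<K. (if 2^k \<le> y then (4::real)^k else 0)) = (4^K - 1)/3"
proof -
  have "\<And>k. k < K \<Longrightarrow> (2::real)^k \<le> y"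
    using assms by (meson dual_order.trans less_imp_le_nat one_le_numeral power_increasing)
  hence e: "\<And>a::real. (\<Sum>k<K. (if 2^k \<le> y then a^k else 0)) = (\<Sum>k<K. a^k)"
    by (intro sum.cong) auto
  show "(\<Sum>k<K. (if 2^k \<le> y then (2::real)^k else 0)) = 2^K - 1"
    unfolding e by (induction K) auto
  show "(\<Sum>k<K. (if 2^k \<le> y then (4::real)^k else 0)) = (4^K - 1)/3"
    unfolding e by (induction K) (auto simp: field_simps)
qed

lemma dyadic_bound:
  fixes y :: real
  assumes "0 \<le> y"
  shows "min y (2^K) \<le> 1 + (\<Sum>k<K. (if 2^k \<le> y then (2::real)^k else 0))"
    and "(min y (2^K))^2 \<le> 1 + 3 * (\<Sum>k<K. (if 2^k \<le> y then (4::real)^k else 0))"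
proof -
  have "min y (2^K) \<le> 1 + (\<Sum>k<K. (if 2^k \<le> y then (2::real)^k else 0)) \<and>
        (min y (2^K))^2 \<le> 1 + 3 * (\<Sum>k<K. (if 2^k \<le> y then (4::real)^k else 0))"
  proof (induction K)
    case 0
    then show ?case using assms by (auto simp: min_def power_le_one)
  next
    case (Suc K)
    show ?case
    proof (cases "2^K \<le> y")
      case True
      have m: "min y (2 ^ Suc K) \<le> 2^Suc K" by simp
      have m2: "(min y (2 ^ Suc K))^2 \<le> (2^Suc K)^2"
        using assms by (intro power_mono) auto
      have "(2::real)^Suc K = 2 * 2^K" by simp
      moreover have "((2::real)^Suc K)^2 = 4 * 4^K" proof -
        have "((2::real)^Suc K)^2 = (2^2)^Suc K" by (simp only: power_mult[symmetric] mult.commute)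
        thus ?thesis by simp
      qed
      ultimately show ?thesis using m m2 True dyadic_sum_full[OF True] by (auto simp: field_simps)
    next
      case False
      hence "min y (2 ^ Suc K) = min y (2^K)" by (auto simp: min_def) (smt (verit) zero_le_power)
      then show ?thesis using Suc False by auto
    qed
  qed
  thus "min y (2^K) \<le> 1 + (\<Sum>k<K. (if 2^k \<le> y then (2::real)^k else 0))"
    and "(min y (2^K))^2 \<le> 1 + 3 * (\<Sum>k<K. (if 2^k \<le> y then (4::real)^k else 0))" by auto
qed



lemma moments_bound:
  assumes D: "prob_space D" and Ym[measurable]: "Y \<in> borel_measurable D"
    and Y0: "\<And>x. 0 \<le> Y x" and c: "0 \<le> c"
    and tail: "\<And>t. t > 0 \<Longrightarrow> measure D {x\<in>space D. t \<le> Y x} \<le> c / t"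
  shows "(LINT x|D. min (Y x) (2^K)) \<le> 1 + c * K"
    and "(LINT x|D. (min (Y x) (2^K))^2) \<le> 1 + 3 * c * 2^K"
proof -
  interpret prob_space D by fact
  define A where "A k = {x\<in>space D. (2::real)^k \<le> Y x}" for k :: nat
  have A[measurable]: "A k \<in> sets D" for k unfolding A_def by measurable
  have int_ind: "integrable D (\<lambda>x. a * indicator (A k) x)" for a :: real and k
    by (intro integrable_mult_right integrable_real_indicator) (auto simp: emeasure_eq_measure)
  have intA: "(LINT x|D. a * indicator (A k) x) = a * measure D (A k)" for a :: real and k
    by simp
  have tA: "measure D (A k) \<le> c / 2^k" for k
    unfolding A_def by (rule tail) simp
  have bd_int: "integrable D (\<lambda>x. min (Y x) (2^K))"
    by (rule integrable_const_bound[where B="2^K"]) (auto simp: Y0)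
  have bd_int2: "integrable D (\<lambda>x. (min (Y x) (2^K))^2)"
    by (rule integrable_const_bound[where B="(2^K)^2"]) (auto simp: Y0 intro!: power_mono)
  have "(LINT x|D. min (Y x) (2^K)) \<le> (LINT x|D. 1 + (\<Sum>k<K. (2::real)^k * indicator (A k) x))"
  proof (rule integral_mono[OF bd_int])
    show "integrable D (\<lambda>x. 1 + (\<Sum>k<K. (2::real)^k * indicator (A k) x))"
      by (intro Bochner_Integration.integrable_add Bochner_Integration.integrable_sum integrable_const int_ind integrable_mult_right)
    fix x assume x: "x \<in> space D"
    have "(\<Sum>k<K. (if 2^k \<le> Y x then (2::real)^k else 0)) = (\<Sum>k<K. (2::real)^k * indicator (A k) x)"
      using x by (intro sum.cong) (auto simp: A_def)
    thus "min (Y x) (2^K) \<le> 1 + (\<Sum>k<K. (2::real)^k * indicator (A k) x)"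
      using dyadic_bound(1)[OF Y0, of x K] by simp
  qed
  also have "\<dots> = 1 + (\<Sum>k<K. (2::real)^k * measure D (A k))"
    apply (subst Bochner_Integration.integral_add)
      apply (rule integrable_const)
     apply (intro Bochner_Integration.integrable_sum int_ind integrable_mult_right)
    apply (subst Bochner_Integration.integral_sum)
     apply (rule int_ind)
    apply (simp only: intA)
    apply (simp add: prob_space)
    done
  also have "\<dots> \<le> 1 + (\<Sum>k<K. c)"
  proof -
    have "(2::real)^k * measure D (A k) \<le> c" for k
      using tA[of k] by (simp add: field_simps)
    thus ?thesis by (intro add_left_mono sum_mono) auto
  qed
  finally show "(LINT x|D. min (Y x) (2^K)) \<le> 1 + c * K" by (simp add: mult.commute)
  have "(LINT x|D. (min (Y x) (2^K))^2) \<le> (LINT x|D. 1 + 3 * (\<Sum>k<K. (4::real)^k * indicator (A k) x))"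
  proof (rule integral_mono[OF bd_int2])
    show "integrable D (\<lambda>x. 1 + 3 * (\<Sum>k<K. (4::real)^k * indicator (A k) x))"
      by (intro Bochner_Integration.integrable_add Bochner_Integration.integrable_sum integrable_const int_ind integrable_mult_right)
    fix x assume x: "x \<in> space D"
    have "(\<Sum>k<K. (if 2^k \<le> Y x then (4::real)^k else 0)) = (\<Sum>k<K. (4::real)^k * indicator (A k) x)"
      using x by (intro sum.cong) (auto simp: A_def)
    thus "(min (Y x) (2^K))^2 \<le> 1 + 3 * (\<Sum>k<K. (4::real)^k * indicator (A k) x)"
      using dyadic_bound(2)[OF Y0, of x K] by simp
  qed
  also have "\<dots> = 1 + 3 * (\<Sum>k<K. (4::real)^k * measure D (A k))"
    apply (subst Bochner_Integration.integral_add)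
      apply (rule integrable_const)
     apply (intro Bochner_Integration.integrable_sum int_ind integrable_mult_right)
    apply (subst Bochner_Integration.integral_mult_right)
     apply (intro Bochner_Integration.integrable_sum int_ind)
    apply (subst Bochner_Integration.integral_sum)
     apply (rule int_ind)
    apply (simp only: intA)
    apply (simp add: prob_space)
    done
  also have "\<dots> \<le> 1 + 3 * (\<Sum>k<K. c * (2::real)^k)"
  proof -
    have "(4::real)^k * measure D (A k) \<le> c * 2^k" for k
    proof -
      have "(4::real)^k = 2^k * 2^k" by (simp flip: power_mult_distrib)
      thus ?thesis using tA[of k] by (simp add: field_simps)
    qed
    thus ?thesis by (intro add_left_mono mult_left_mono sum_mono) auto
  qed
  also have "(\<Sum>k<K. c * (2::real)^k) = c * (2^K - 1)"
    by (simp add: sum_distrib_left[symmetric]) (induction K, auto)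
  also have "1 + 3 * (c * (2^K - 1)) \<le> 1 + 3 * c * 2^K" using c by (simp add: algebra_simps)
  finally show "(LINT x|D. (min (Y x) (2^K))^2) \<le> 1 + 3 * c * 2^K" .
qed


lemma product_concentration:
  fixes Y :: "'a \<Rightarrow> real" and I :: "'i set" and q a b L T :: real
  assumes D: "prob_space D" and Ym[measurable]: "Y \<in> borel_measurable D" and Y0: "\<And>x. 0 \<le> Y x"
    and I: "finite I" and L: "L > 0" and T: "T > 0"
    and tailL: "measure D {x\<in>space D. L \<le> Y x} \<le> q"
    and m1: "(LINT x|D. min (Y x) L) \<le> a" and m2: "(LINT x|D. (min (Y x) L)^2) \<le> b"
    and half: "real (card I) * a \<le> T/2"
  shows "measure (PiM I (\<lambda>_. D)) {x \<in> space (PiM I (\<lambda>_. D)). (\<Sum>i\<in>I. Y (x i)) \<le> T}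
           \<ge> 1 - real (card I) * q - real (card I) * b / (T/2)^2"
proof -
  define M where "M = PiM I (\<lambda>_. D)"
  interpret Dp: prob_space D by fact
  interpret prob_space M unfolding M_def by (rule prob_space_PiM) (rule D)
  interpret PS: product_sigma_finite "\<lambda>_. D"
    unfolding product_sigma_finite_def by (auto intro: Dp.sigma_finite_measure_axioms)
  define g where "g y = min (Y y) L" for y
  have gm[measurable]: "g \<in> borel_measurable D" unfolding g_def by measurable
  have g0: "0 \<le> g y" "g y \<le> L" for y using Y0 L by (auto simp: g_def)
  have gi: "integrable D g" by (rule Dp.integrable_const_bound[where B=L]) (auto simp: g0 abs_of_nonneg)
  have g2i: "integrable D (\<lambda>y. g y * g y)"
    by (rule Dp.integrable_const_bound[where B="L*L"]) (use L in \<open>auto simp: g0 abs_of_nonneg intro!: mult_mono AE_I2\<close>)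
  define \<mu> where "\<mu> = (LINT y|D. g y)"
  define e2 where "e2 = (LINT y|D. g y * g y)"
  have comp[measurable]: "(\<lambda>x. x i) \<in> measurable M D" if "i \<in> I" for i
    unfolding M_def using that by measurable
  have int_comp: "(LINT x|M. h (x i)) = (LINT y|D. h y)" if "i \<in> I" "h \<in> borel_measurable D" for h :: "'a \<Rightarrow> real" and i
  proof -
    have "(LINT y|D. h y) = (LINT y|distr M D (\<lambda>x. x i). h y)"
      unfolding M_def using that D by (subst distr_PiM_component) auto
    also have "\<dots> = (LINT x|M. h (x i))"
      by (rule integral_distr[OF comp[OF that(1)] that(2)])
    finally show ?thesis by simp
  qed
  have pair: "(LINT x|M. g (x i) * g (x j)) = \<mu> * \<mu>" if "i \<in> I" "j \<in> I" "i \<noteq> j" for i j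
  proof -
    have "(LINT x|M. (\<Prod>k\<in>I. (if k \<in> {i,j} then g else (\<lambda>_. 1)) (x k)))
          = (\<Prod>k\<in>I. LINT y|D. (if k \<in> {i,j} then g else (\<lambda>_. 1)) y)"
      unfolding M_def using I gi by (intro PS.product_integral_prod) auto
    also have "\<dots> = (\<Prod>k\<in>I. if k \<in> {i,j} then \<mu> else 1)"
      unfolding \<mu>_def by (intro prod.cong) (auto simp: Dp.prob_space)
    also have "\<dots> = (\<Prod>k\<in>I \<inter> {i,j}. \<mu>)"
      by (rule prod.inter_restrict[OF I, symmetric])
    also have "I \<inter> {i,j} = {i,j}" using that by auto
    finally have 1: "(LINT x|M. (\<Prod>k\<in>I. (if k \<in> {i,j} then g else (\<lambda>_. 1)) (x k))) = \<mu> * \<mu>"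
      using that by simp
    have "(\<Prod>k\<in>I. (if k \<in> {i,j} then g else (\<lambda>_. 1)) (x k)) = g (x i) * g (x j)" for x
    proof -
      have "(\<Prod>k\<in>I. (if k \<in> {i,j} then g else (\<lambda>_. 1)) (x k)) = (\<Prod>k\<in>I. if k \<in> {i,j} then g (x k) else 1)"
        by (intro prod.cong) auto
      also have "\<dots> = (\<Prod>k\<in>I \<inter> {i,j}. g (x k))"
        by (rule prod.inter_restrict[OF I, symmetric])
      also have "I \<inter> {i,j} = {i,j}" using that by auto
      finally show ?thesis using that by simp
    qed
    with 1 show ?thesis by simp
  qed
  have Gm[measurable]: "(\<lambda>x. g (x i)) \<in> borel_measurable M" if "i \<in> I" for i
    using measurable_compose[OF comp[OF that] gm] .
  have Gi: "integrable M (\<lambda>x. g (x i))" if "i \<in> I" for i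
    by (rule integrable_const_bound[where B=L]) (use that g0 in \<open>auto simp: abs_of_nonneg\<close>)
  have GGi: "integrable M (\<lambda>x. g (x i) * g (x j))" if "i \<in> I" "j \<in> I" for i j
    by (rule integrable_const_bound[where B="L*L"])
       (use that g0 L in \<open>auto simp: abs_of_nonneg intro!: mult_mono AE_I2\<close>)
  define S where "S x = (\<Sum>i\<in>I. g (x i))" for x
  have Sm[measurable]: "S \<in> borel_measurable M" unfolding S_def
    by (intro borel_measurable_sum) (use Gm in auto)
  have ES: "(LINT x|M. S x) = real (card I) * \<mu>"
    unfolding S_def \<mu>_def
    by (subst Bochner_Integration.integral_sum) (use Gi int_comp gm in auto)
  have S2: "(S x)^2 = (\<Sum>i\<in>I. \<Sum>j\<in>I. g (x i) * g (x j))" for x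
    unfolding S_def power2_eq_square by (simp add: sum_product)
  have S2i: "integrable M (\<lambda>x. (S x)^2)"
    unfolding S2 by (intro Bochner_Integration.integrable_sum GGi)
  have EGG: "(LINT x|M. g (x i) * g (x j)) = \<mu> * \<mu> + (if i = j then e2 - \<mu> * \<mu> else 0)"
    if "i \<in> I" "j \<in> I" for i j
  proof (cases "i = j")
    case True
    then show ?thesis unfolding e2_def using int_comp[OF that(1), of "\<lambda>y. g y * g y"] by simp
  next
    case False
    then show ?thesis using pair[OF that False] by simp
  qed
  have ES2: "(LINT x|M. (S x)^2) = real (card I) * real (card I) * (\<mu> * \<mu>) + real (card I) * (e2 - \<mu> * \<mu>)"
  proof -
    have "(LINT x|M. (S x)^2) = (\<Sum>i\<in>I. \<Sum>j\<in>I. LINT x|M. g (x i) * g (x j))"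
      unfolding S2
      by (subst Bochner_Integration.integral_sum, use GGi in \<open>auto intro!: Bochner_Integration.integrable_sum\<close>)
    also have "\<dots> = (\<Sum>i\<in>I. \<Sum>j\<in>I. \<mu> * \<mu> + (if i = j then e2 - \<mu> * \<mu> else 0))"
      by (intro sum.cong refl EGG)
    also have "\<dots> = (\<Sum>i\<in>I. real (card I) * (\<mu> * \<mu>) + (e2 - \<mu> * \<mu>))"
      by (intro sum.cong refl) (simp add: sum.distrib I)
    also have "\<dots> = real (card I) * real (card I) * (\<mu> * \<mu>) + real (card I) * (e2 - \<mu> * \<mu>)"
      by (simp add: algebra_simps)
    finally show ?thesis .
  qed
  have var: "variance S \<le> real (card I) * b"
  proof -
    have Si: "integrable M S" unfolding S_def by (intro Bochner_Integration.integrable_sum Gi)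
    have "variance S = real (card I) * (e2 - \<mu> * \<mu>)"
      using variance_eq[OF Si S2i] ES ES2 by (simp add: power2_eq_square algebra_simps)
    also have "\<dots> \<le> real (card I) * e2" by (simp add: mult_left_mono)
    also have "e2 \<le> b" using m2 unfolding e2_def g_def by (simp add: power2_eq_square)
    hence "real (card I) * e2 \<le> real (card I) * b" by (simp add: mult_left_mono)
    finally show ?thesis .
  qed
  define c where "c = T - real (card I) * \<mu>"
  have "\<mu> \<le> a" using m1 unfolding \<mu>_def g_def .
  hence "real (card I) * \<mu> \<le> real (card I) * a" by (simp add: mult_left_mono)
  hence c: "c \<ge> T/2" using half unfolding c_def by linarith
  with T have c0: "c > 0" by linarith
  have cheb: "prob {x\<in>space M. \<bar>S x - real (card I) * \<mu>\<bar> \<ge> c} \<le> variance S / c^2"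
    using Chebyshev_inequality[OF Sm S2i c0] ES by simp
  also have "\<dots> \<le> real (card I) * b / c^2" using var by (simp add: divide_right_mono)
  also have "\<dots> \<le> real (card I) * b / (T/2)^2"
  proof -
    have "0 \<le> real (card I) * b" using var variance_positive[of S] by linarith
    moreover have "(T/2)^2 \<le> c^2" using c T by (intro power_mono) auto
    ultimately show ?thesis using T c0 by (intro divide_left_mono) auto
  qed
  finally have A2: "prob {x\<in>space M. \<bar>S x - real (card I) * \<mu>\<bar> \<ge> c} \<le> real (card I) * b / (T/2)^2" .
  define B where "B i = {x\<in>space M. L \<le> Y (x i)}" for i
  have Bm: "B i \<in> sets M" if "i \<in> I" for i
  proof -
    have [measurable]: "(\<lambda>x. Y (x i)) \<in> borel_measurable M"
      using measurable_compose[OF comp[OF that] Ym] .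
    show ?thesis unfolding B_def by measurable
  qed
  have PB: "prob (B i) \<le> q" if "i \<in> I" for i
  proof -
    have Ls[measurable]: "{x\<in>space D. L \<le> Y x} \<in> sets D" by measurable
    have "prob (B i) = measure (distr M D (\<lambda>x. x i)) {x\<in>space D. L \<le> Y x}"
      by (subst measure_distr[OF comp[OF that] Ls]) (auto simp: B_def intro!: arg_cong[where f=prob] dest: measurable_space[OF comp[OF that]])
    also have "distr M D (\<lambda>x. x i) = D"
      unfolding M_def using that D by (subst distr_PiM_component) auto
    finally show ?thesis using tailL by simp
  qed
  have A1: "prob (\<Union>i\<in>I. B i) \<le> real (card I) * q"
  proof -
    have "prob (\<Union>i\<in>I. B i) \<le> (\<Sum>i\<in>I. prob (B i))"
      using I Bm by (intro finite_measure_subadditive_finite) auto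
    also have "\<dots> \<le> (\<Sum>i\<in>I. q)" by (intro sum_mono PB)
    finally show ?thesis by simp
  qed
  define E where "E = {x \<in> space M. (\<Sum>i\<in>I. Y (x i)) \<le> T}"
  have Em: "E \<in> sets M"
  proof -
    have [measurable]: "(\<lambda>x. (\<Sum>i\<in>I. Y (x i))) \<in> borel_measurable M"
      by (intro borel_measurable_sum measurable_compose[OF comp Ym])
    show ?thesis unfolding E_def by measurable
  qed
  have A2m: "{x\<in>space M. \<bar>S x - real (card I) * \<mu>\<bar> \<ge> c} \<in> sets M" by measurable
  have sub: "space M - E \<subseteq> (\<Union>i\<in>I. B i) \<union> {x\<in>space M. \<bar>S x - real (card I) * \<mu>\<bar> \<ge> c}"
  proof
    fix x assume x: "x \<in> space M - E"
    show "x \<in> (\<Union>i\<in>I. B i) \<union> {x\<in>space M. \<bar>S x - real (card I) * \<mu>\<bar> \<ge> c}"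
    proof (cases "\<exists>i\<in>I. L \<le> Y (x i)")
      case True then show ?thesis using x by (auto simp: B_def)
    next
      case False
      hence "S x = (\<Sum>i\<in>I. Y (x i))" unfolding S_def g_def by (intro sum.cong) auto
      hence "S x > T" using x by (auto simp: E_def)
      hence "\<bar>S x - real (card I) * \<mu>\<bar> \<ge> c" unfolding c_def by linarith
      then show ?thesis using x by auto
    qed
  qed
  have "prob (space M - E) \<le> prob ((\<Union>i\<in>I. B i) \<union> {x\<in>space M. \<bar>S x - real (card I) * \<mu>\<bar> \<ge> c})"
    using sub Bm A2m I by (intro finite_measure_mono sets.Un sets.finite_UN) auto
  also have "\<dots> \<le> prob (\<Union>i\<in>I. B i) + prob {x\<in>space M. \<bar>S x - real (card I) * \<mu>\<bar> \<ge> c}"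
    using Bm A2m I by (intro measure_Un_le sets.finite_UN) auto
  finally have "prob (space M - E) \<le> real (card I) * q + real (card I) * b / (T/2)^2" using A1 A2 by linarith
  hence "prob E \<ge> 1 - real (card I) * q - real (card I) * b / (T/2)^2" using prob_compl[OF Em] by linarith
  thus ?thesis unfolding E_def M_def .
qed


lemma ln3_bound: "ln (3::real) \<ge> 109/100"
proof -
  have e1: "exp (9/100::real) \<le> 100/91"
  proof -
    have "exp (-(9/100::real)) \<ge> 1 - 9/100" using exp_ge_add_one_self[of "-(9/100)"] by simp
    hence "1 / exp (-(9/100::real)) \<le> 1 / (91/100)" by (intro divide_left_mono) auto
    thus ?thesis by (simp add: exp_minus field_simps)
  qed
  have "exp (109/100::real) = exp 1 * exp (9/100)" by (simp flip: exp_add)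
  also have "\<dots> \<le> (272/100) * (100/91)"
    using e_less_272 e1 by (intro mult_mono) auto
  also have "\<dots> \<le> 3" by simp
  finally show ?thesis by (subst ln_ge_iff) auto
qed

lemma lnln3_bound: "ln (ln (3::real)) \<ge> 8/100"
proof -
  have l: "ln (3::real) > 0" using ln3_bound by linarith
  have "ln (1 / ln (3::real)) \<le> 1 / ln 3 - 1" using l by (intro ln_le_minus_one) auto
  hence "ln (ln (3::real)) \<ge> 1 - 1 / ln 3" using l by (simp add: ln_div)
  moreover have "1 / ln (3::real) \<le> 100/109" using ln3_bound l by (simp add: field_simps)
  ultimately show ?thesis by linarith
qed

lemma ln2_bounds: "ln (2::real) \<ge> 1/2" "ln (2::real) \<le> 1"
proof -
  have "ln (1 / 2) \<le> 1 / 2 - (1::real)" by (intro ln_le_minus_one) auto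
  thus "ln (2::real) \<ge> 1/2" by (simp add: ln_div)
  show "ln (2::real) \<le> 1" using ln_le_minus_one[of 2] by simp
qed



lemma Y_tail:
  assumes "std_sym_stable p D" "1 \<le> p" "p < 2" "t > 0"
  shows "measure D {x\<in>space D. t \<le> \<bar>x\<bar> powr p} \<le> 8 / t"
proof -
  define s where "s = t powr (1/p)"
  have s: "s > 0" using assms by (simp add: s_def)
  have "{x\<in>space D. t \<le> \<bar>x\<bar> powr p} \<subseteq> {x. s \<le> \<bar>x\<bar>}"
  proof safe
    fix x assume "t \<le> \<bar>x\<bar> powr p"
    hence "t powr (1/p) \<le> (\<bar>x\<bar> powr p) powr (1/p)" using assms by (intro powr_mono2) auto
    also have "\<dots> = \<bar>x\<bar>" using assms by (simp add: powr_powr)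
    finally show "s \<le> \<bar>x\<bar>" by (simp add: s_def)
  qed
  hence "measure D {x\<in>space D. t \<le> \<bar>x\<bar> powr p} \<le> measure D {x. s \<le> \<bar>x\<bar>}"
  proof -
    assume sub: "{x\<in>space D. t \<le> \<bar>x\<bar> powr p} \<subseteq> {x. s \<le> \<bar>x\<bar>}"
    interpret prob_space D using assms(1) by (simp add: std_sym_stable_def)
    have sD: "sets D = sets borel" using assms(1) by (simp add: std_sym_stable_def)
    have "{x. s \<le> \<bar>x\<bar>} \<in> sets D" unfolding sD by measurable
    thus ?thesis using sub by (intro finite_measure_mono)
  qed
  also have "\<dots> \<le> 8 * s powr (-p)" using stable_tail[OF assms(1) _ _ s] assms by auto
  also have "s powr (-p) = 1 / t" using assms by (simp add: s_def powr_powr powr_minus_divide)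
  finally show ?thesis by simp
qed

theorem mainTheorem12:
  fixes p :: real
  assumes "1 \<le> p" and "p < 2"
  shows "\<exists>U>0. \<forall>D. std_sym_stable p D \<longrightarrow>
           (\<forall>n::nat. n \<ge> 3 \<longrightarrow>
              measure (PiM {1..n} (\<lambda>_. D))
                {x \<in> space (PiM {1..n} (\<lambda>_. D)).
                   (\<Sum>i=1..n. \<bar>x i\<bar> powr p) \<le> U * real n * ln (real n)}
              \<ge> 1 - ln (ln (real n)) / ln (real n))"
proof (intro exI[of _ 4096] conjI allI impI, simp)
  fix D :: "real measure" and n :: nat
  assume st: "std_sym_stable p D" and n3: "n \<ge> 3"
  interpret Dp: prob_space D using st by (simp add: std_sym_stable_def)
  have sD: "sets D = sets borel" using st by (simp add: std_sym_stable_def)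
  define Y where "Y x = \<bar>x\<bar> powr p" for x :: real
  have Ym: "Y \<in> borel_measurable D"
    unfolding Y_def measurable_cong_sets[OF sD refl] by measurable
  have Y0: "0 \<le> Y x" for x unfolding Y_def by simp
  have tail: "measure D {x\<in>space D. t \<le> Y x} \<le> 8 / t" if "t > 0" for t
    unfolding Y_def using Y_tail[OF st assms that] .
  define N where "N = real n"
  have N3: "N \<ge> 3" using n3 by (simp add: N_def)
  have lnN: "ln N \<ge> 109/100"
  proof -
    have "ln 3 \<le> ln N" using N3 by simp
    thus ?thesis using ln3_bound by linarith
  qed
  have lnlnN: "ln (ln N) \<ge> 8/100"
  proof -
    have "ln 3 \<le> ln N" using N3 by simp
    hence "ln (ln 3) \<le> ln (ln N)" using ln3_bound by (subst ln_le_cancel_iff) auto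
    thus ?thesis using lnln3_bound by linarith
  qed
  define T where "T = 4096 * N * ln N"
  have T1: "T \<ge> 1"
  proof -
    have "1 * 1 \<le> N * ln N" using N3 lnN by (intro mult_mono) auto
    thus ?thesis unfolding T_def by simp
  qed
  define K where "K = nat \<lceil>log 2 T\<rceil>"
  define L :: real where "L = 2^K"
  have logT0: "log 2 T \<ge> 0" using T1 by simp
  have KL: "real K = real_of_int \<lceil>log 2 T\<rceil>" unfolding K_def using logT0 by simp
  have LK: "L = 2 powr (real K)" unfolding L_def by (simp add: powr_realpow)
  have TL: "T \<le> L"
  proof -
    have "T = 2 powr (log 2 T)" using T1 by simp
    also have "\<dots> \<le> 2 powr (real K)" unfolding KL by (intro powr_mono) auto
    finally show ?thesis using LK by simp
  qed
  have L2T: "L \<le> 2 * T"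
  proof -
    have "2 powr (real K) \<le> 2 powr (log 2 T + 1)" unfolding KL by (intro powr_mono) linarith+
    also have "\<dots> = 2 * T" using T1 by (simp add: powr_add)
    finally show ?thesis using LK by simp
  qed
  have Kle: "real K \<le> log 2 T + 1" unfolding KL by linarith
  have L0: "L > 0" using TL T1 by linarith
  have mom1: "(LINT x|D. min (Y x) L) \<le> 1 + 8 * real K"
    unfolding L_def by (rule moments_bound(1)[OF Dp.prob_space_axioms Ym Y0 _ tail]) auto
  have mom2: "(LINT x|D. (min (Y x) L)^2) \<le> 1 + 3 * 8 * L"
    unfolding L_def by (rule moments_bound(2)[OF Dp.prob_space_axioms Ym Y0 _ tail]) auto
  have half: "real (card {1..n}) * (1 + 8 * real K) \<le> T/2"
  proof -
    have "ln T = ln 4096 + ln N + ln (ln N)"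
      unfolding T_def using N3 lnN by (simp add: ln_mult)
    moreover have "ln (4096::real) = 12 * ln 2"
    proof -
      have "(4096::real) = 2^12" by simp
      hence "ln (4096::real) = ln (2^12)" by simp
      also have "\<dots> = 12 * ln 2" using ln_realpow[of 2 12] by simp
      finally show ?thesis .
    qed
    moreover have "ln (ln N) \<le> ln N" using lnN by (intro ln_bound) linarith
    ultimately have lnT: "ln T \<le> 12 + 2 * ln N" using ln2_bounds by linarith
    have "log 2 T = ln T / ln 2" by (simp add: log_def)
    also have "\<dots> \<le> 2 * ln T"
    proof -
      have "ln T \<ge> 0" using T1 by simp
      hence "ln T * 1 \<le> ln T * (2 * ln 2)" using ln2_bounds by (intro mult_left_mono) auto
      thus ?thesis using ln2_bounds by (simp add: divide_simps)
    qed
    finally have lg: "log 2 T \<le> 2 * ln T" .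
    have "real K \<le> 2 * (12 + 2 * ln N) + 1" using Kle lnT lg by argo
    hence "1 + 8 * real K \<le> 1 + 8 * (2 * (12 + 2 * ln N) + 1)" by argo
    also have "\<dots> \<le> 2048 * ln N" using lnN by argo
    finally have "N * (1 + 8 * real K) \<le> N * (2048 * ln N)" using N3 by (intro mult_left_mono) auto
    thus ?thesis by (simp add: T_def N_def)
  qed
  have T0: "T > 0" using T1 by linarith
  note main = product_concentration[OF Dp.prob_space_axioms Ym Y0 finite_atLeastAtMost[of 1 n] L0 T0
      tail[OF L0] mom1 mom2 half]
  have cardn: "real (card {1..n}) = N" by (simp add: N_def)
  have b1: "N * (8 / L) \<le> 8 * N / T"
  proof -
    have "8 / L \<le> 8 / T" using TL T0 by (intro divide_left_mono) auto
    hence "N * (8 / L) \<le> N * (8 / T)" using N3 by (intro mult_left_mono) auto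
    thus ?thesis by (simp add: mult.commute)
  qed
  have b2: "N * (1 + 3 * 8 * L) / (T/2)^2 \<le> 196 * N / T"
  proof -
    have "1 + 3 * 8 * L \<le> 49 * T" using L2T T1 by argo
    hence "N * (1 + 3 * 8 * L) \<le> N * (49 * T)" using N3 by (intro mult_left_mono) auto
    hence "N * (1 + 3 * 8 * L) / (T/2)^2 \<le> N * (49 * T) / (T/2)^2"
      by (intro divide_right_mono) auto
    also have "\<dots> = 196 * N / T" using T0 by (simp add: power2_eq_square field_simps)
    finally show ?thesis .
  qed
  have b3: "204 * N / T \<le> ln (ln N) / ln N"
  proof -
    have "204 * N / T = 204 / (4096 * ln N)" unfolding T_def using N3 by (simp add: field_simps)
    also have "\<dots> \<le> (8/100) / ln N" using lnN by (simp add: divide_simps)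
    also have "\<dots> \<le> ln (ln N) / ln N" using lnN lnlnN by (intro divide_right_mono) auto
    finally show ?thesis .
  qed
  have eqset: "{x \<in> space (PiM {1..n} (\<lambda>_. D)). (\<Sum>i=1..n. \<bar>x i\<bar> powr p) \<le> 4096 * real n * ln (real n)}
     = {x \<in> space (PiM {1..n} (\<lambda>_. D)). (\<Sum>i\<in>{1..n}. Y (x i)) \<le> T}"
    by (simp add: Y_def T_def N_def)
  show "measure (PiM {1..n} (\<lambda>_. D))
                {x \<in> space (PiM {1..n} (\<lambda>_. D)).
                   (\<Sum>i=1..n. \<bar>x i\<bar> powr p) \<le> 4096 * real n * ln (real n)}
              \<ge> 1 - ln (ln (real n)) / ln (real n)"
    unfolding eqset using main b1 b2 b3 unfolding cardn N_def[symmetric] by argo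
qed

end
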